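(* Let $A\in\mathbb{C}^{n\times n}$, and fix $A^-\in A\{1\}$ and $A^{GD}\in A\{GD\}$. Then $A^{-}AA^{GD}$ is the $(A^{-}A,\,AA^{GD})$-inverse of $A$.
   Context: For $A\in\mathbb{C}^{n\times n}$, $ind(A)$ is the smallest nonnegative integer $k$ with $\mathrm{rank}(A^k)=\mathrm{rank}(A^{k+1})$. $A\{1\}$ is the set of matrices $X$ with $AXA=A$. With $k=ind(A)$, $A\{GD\}$ is the set of G-Drazin inverses of $A$: matrices $X$ with $AXA=A$, $XA^{k+1}=A^k$, $A^{k+1}X=A^k$. For $A,B,C\in\mathbb{C}^{n\times n}$, a matrix $X$ is the $(B,C)$-inverse of $A$ if $XAB=B$, $CAX=C$, $N(C)\subseteq N(X)$ and $R(X)\subseteq R(B)$; $R(\cdot)$, $N(\cdot)$ denote range and null space. *)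

theory Defs
  imports "HOL-Analysis.Analysis"
begin

primrec mpow :: "'a::comm_ring_1^'n^'n \<Rightarrow> nat \<Rightarrow> 'a^'n^'n" where
  "mpow A 0 = mat 1"
| "mpow A (Suc k) = A ** mpow A k"

definition ind :: "complex^'n^'n \<Rightarrow> nat" where
  "ind A = (LEAST k. rank (mpow A k) = rank (mpow A (Suc k)))"

definition range_m :: "complex^'n^'n \<Rightarrow> (complex^'n) set" where
  "range_m X = range (\<lambda>v. X *v v)"

definition null_m :: "complex^'n^'n \<Rightarrow> (complex^'n) set" where
  "null_m X = {v. X *v v = 0}"

definition inner1 :: "complex^'n^'n \<Rightarrow> (complex^'n^'n) set" where
  "inner1 A = {X. A ** X ** A = A}"

definition GD_inverses :: "complex^'n^'n \<Rightarrow> (complex^'n^'n) set" where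
  "GD_inverses A = {X. A ** X ** A = A \<and>
      X ** mpow A (Suc (ind A)) = mpow A (ind A) \<and>
      mpow A (Suc (ind A)) ** X = mpow A (ind A)}"

definition is_BC_inverse :: "complex^'n^'n \<Rightarrow> complex^'n^'n \<Rightarrow> complex^'n^'n \<Rightarrow> complex^'n^'n \<Rightarrow> bool" where
  "is_BC_inverse A B C X \<longleftrightarrow> X ** A ** B = B \<and> C ** A ** X = C \<and>
      null_m C \<subseteq> null_m X \<and> range_m X \<subseteq> range_m B"

end

theory Submission
  imports Defs
begin

theorem theorem3p10:
  fixes A Am Agd :: "complex^'n^'n"
  assumes "Am \<in> inner1 A" and "Agd \<in> GD_inverses A"
  shows "is_BC_inverse A (Am ** A) (A ** Agd) (Am ** A ** Agd)"
proof -
  have h1: "A ** Am ** A = A" using assms(1) by (simp add: inner1_def)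
  have h2: "A ** Agd ** A = A" using assms(2) by (simp add: GD_inverses_def)
  have e1: "Am ** A ** Agd ** A ** (Am ** A) = Am ** A"
  proof -
    have "Am ** A ** Agd ** A ** (Am ** A) = Am ** (A ** Agd ** A) ** Am ** A"
      by (simp add: matrix_mul_assoc)
    also have "\<dots> = Am ** (A ** Am ** A)" using h2 by (simp add: matrix_mul_assoc)
    also have "\<dots> = Am ** A" using h1 by simp
    finally show ?thesis .
  qed
  have e2: "A ** Agd ** A ** (Am ** A ** Agd) = A ** Agd"
  proof -
    have "A ** Agd ** A ** (Am ** A ** Agd) = (A ** Agd ** A) ** Am ** A ** Agd"
      by (simp add: matrix_mul_assoc)
    also have "\<dots> = (A ** Am ** A) ** Agd" using h2 by (simp add: matrix_mul_assoc)
    also have "\<dots> = A ** Agd" using h1 by simp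
    finally show ?thesis .
  qed
  have e3: "null_m (A ** Agd) \<subseteq> null_m (Am ** A ** Agd)"
  proof
    fix v assume "v \<in> null_m (A ** Agd)"
    hence "(A ** Agd) *v v = 0" by (simp add: null_m_def)
    hence "Am *v ((A ** Agd) *v v) = 0" by simp
    thus "v \<in> null_m (Am ** A ** Agd)"
      by (simp add: null_m_def matrix_vector_mul_assoc matrix_mul_assoc)
  qed
  have e4: "range_m (Am ** A ** Agd) \<subseteq> range_m (Am ** A)"
  proof
    fix w assume "w \<in> range_m (Am ** A ** Agd)"
    then obtain v where "w = (Am ** A ** Agd) *v v" by (auto simp: range_m_def)
    hence "w = (Am ** A) *v (Agd *v v)" by (simp add: matrix_vector_mul_assoc)
    thus "w \<in> range_m (Am ** A)" by (auto simp: range_m_def)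
  qed
  show ?thesis unfolding is_BC_inverse_def
    using e1 e2 e3 e4 by (simp add: matrix_mul_assoc)
qed

end
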